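(* Let $G$ and $H$ be nontrivial finite groups and let $p$ be a prime. Then $G\times H$ contains an element of order $p$ whose centralizer in $G\times H$ is a $p$-group if and only if both $G$ contains an element of order $p$ whose centralizer in $G$ is a $p$-group and $H$ contains an element of order $p$ whose centralizer in $H$ is a $p$-group. *)

theory Defs
  imports "HOL-Algebra.Algebra"
begin

definition elem_centralizer :: "('a, 'b) monoid_scheme \<Rightarrow> 'a \<Rightarrow> 'a set" where
  "elem_centralizer G g = {x \<in> carrier G. x \<otimes>\<^bsub>G\<^esub> g = g \<otimes>\<^bsub>G\<^esub> x}"

definition is_p_group_set :: "nat \<Rightarrow> 'a set \<Rightarrow> bool" where
  "is_p_group_set p S \<longleftrightarrow> finite S \<and> (\<exists>k::nat. card S = p ^ k)"

definition has_p_elem_pcentralizer :: "('a, 'b) monoid_scheme \<Rightarrow> nat \<Rightarrow> bool" where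
  "has_p_elem_pcentralizer G p \<longleftrightarrow>
     (\<exists>g \<in> carrier G. group.ord G g = p \<and> is_p_group_set p (elem_centralizer G g))"

end

theory Submission
  imports Defs
begin

lemma DirProd_pow:
  "(g, h) [^]\<^bsub>G \<times>\<times> H\<^esub> (n::nat) = (g [^]\<^bsub>G\<^esub> n, h [^]\<^bsub>H\<^esub> n)"
  by (induction n) auto

lemma ord_DirProd:
  assumes "group G" "group H" "g \<in> carrier G" "h \<in> carrier H"
  shows "group.ord (G \<times>\<times> H) (g, h) = lcm (group.ord G g) (group.ord H h)"
proof -
  have gp: "group (G \<times>\<times> H)" using assms DirProd_group by blast
  show ?thesis
    using assms
    by (simp add: group.ord_unique[OF gp] DirProd_pow group.pow_eq_id)
qed

lemma centr_DirProd:
  "elem_centralizer (G \<times>\<times> H) (g, h) = elem_centralizer G g \<times> elem_centralizer H h"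
  unfolding elem_centralizer_def by auto

lemma (in group) centr_sub':
  assumes "g \<in> carrier G"
  shows "subgroup (elem_centralizer G g) G"
proof -
  show ?thesis
  proof
    show "elem_centralizer G g \<subseteq> carrier G" unfolding elem_centralizer_def by auto
  next
    fix x y assume "x \<in> elem_centralizer G g" "y \<in> elem_centralizer G g"
    then show "x \<otimes> y \<in> elem_centralizer G g" using assms(1)
      unfolding elem_centralizer_def by (auto simp: m_assoc) (metis m_assoc)
  next
    show "\<one> \<in> elem_centralizer G g" using assms(1) unfolding elem_centralizer_def by auto
  next
    fix x assume x: "x \<in> elem_centralizer G g"
    then have xc: "x \<in> carrier G" and e: "x \<otimes> g = g \<otimes> x" unfolding elem_centralizer_def by auto
    have "inv x \<otimes> g = inv x \<otimes> g \<otimes> (x \<otimes> inv x)" using xc assms(1) by simp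
    also have "\<dots> = inv x \<otimes> (x \<otimes> g) \<otimes> inv x" using xc assms(1) e by (simp add: m_assoc)
    also have "\<dots> = g \<otimes> inv x" using xc assms(1) by (simp add: m_assoc[symmetric])
    finally show "inv x \<in> elem_centralizer G g" using xc unfolding elem_centralizer_def by auto
  qed
qed

lemma centr_sub:
  assumes "group G" "g \<in> carrier G"
  shows "subgroup (elem_centralizer G g) G"
  using group.centr_sub'[OF assms] .

lemma centr_one_in:
  assumes "group G" "g \<in> carrier G"
  shows "\<one>\<^bsub>G\<^esub> \<in> elem_centralizer G g"
  using assms unfolding elem_centralizer_def by (simp add: group.is_monoid)

lemma pgroup_prod:
  assumes "Factorial_Ring.prime p" "A \<noteq> {}" "B \<noteq> {}"
  shows "is_p_group_set p (A \<times> B) \<longleftrightarrow> is_p_group_set p A \<and> is_p_group_set p B"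
proof
  assume h: "is_p_group_set p (A \<times> B)"
  then obtain k where f: "finite (A \<times> B)" and c: "card A * card B = p ^ k"
    unfolding is_p_group_set_def by (auto simp: card_cartesian_product)
  have fA: "finite A" "finite B" using f assms finite_cartesian_productD1 finite_cartesian_productD2 by auto
  have "card A dvd p ^ k" "card B dvd p ^ k" using c by (metis dvd_triv_left, metis dvd_triv_right)
  then show "is_p_group_set p A \<and> is_p_group_set p B"
    using fA divides_primepow_nat[OF assms(1)] unfolding is_p_group_set_def by blast
next
  assume "is_p_group_set p A \<and> is_p_group_set p B"
  then obtain i j where "finite A" "finite B" "card A = p ^ i" "card B = p ^ j"
    unfolding is_p_group_set_def by blast
  then show "is_p_group_set p (A \<times> B)"
    unfolding is_p_group_set_def by (auto simp: card_cartesian_product power_add[symmetric])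
qed

lemma sub_pgroup:
  assumes "group G" "finite (carrier G)" "Factorial_Ring.prime p" "is_p_group_set p (carrier G)"
    "subgroup S G"
  shows "is_p_group_set p S"
proof -
  interpret group G by fact
  obtain k where k: "card (carrier G) = p ^ k" using assms(4) unfolding is_p_group_set_def by blast
  have "card S dvd order G" by (metis dvd_triv_right lagrange assms(5))
  then have "card S dvd p ^ k" using k unfolding order_def by simp
  moreover have "finite S" using assms(2,5) subgroup.subset finite_subset by blast
  ultimately show ?thesis using divides_primepow_nat[OF assms(3)] unfolding is_p_group_set_def by blast
qed

lemma (in group) pgroup_has':
  assumes "finite (carrier G)" "Factorial_Ring.prime p" "is_p_group_set p (carrier G)"
    "carrier G \<noteq> {\<one>}"
  shows "has_p_elem_pcentralizer G p"
proof -
  obtain k where k: "card (carrier G) = p ^ k" using assms(3) unfolding is_p_group_set_def by blast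
  obtain x where x: "x \<in> carrier G" "x \<noteq> \<one>" using assms(4) one_closed by blast
  have "ord x dvd p ^ k" using ord_dvd_group_order[OF x(1)] k unfolding order_def by simp
  then obtain i where i: "ord x = p ^ i" using divides_primepow_nat[OF assms(2)] by blast
  have "i \<noteq> 0" using i ord_eq_1[OF x(1)] x(2) by auto
  then obtain j where j: "i = Suc j" using not0_implies_Suc by blast
  have pp: "p > 0" using assms(2) prime_gt_0_nat by blast
  have "ord (x [^] (p ^ j)) = ord x div p ^ j"
    by (rule ord_pow[OF x(1)]) (use i j pp in auto)
  also have "\<dots> = p" using i j pp by simp
  finally have o: "ord (x [^] (p ^ j)) = p" .
  have "is_p_group_set p (elem_centralizer G (x [^] (p ^ j)))"
    using sub_pgroup[OF is_group assms(1-3) centr_sub']  x(1) by simp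
  then show ?thesis unfolding has_p_elem_pcentralizer_def using o x(1) by blast
qed

lemma pgroup_has:
  assumes "group G" "finite (carrier G)" "Factorial_Ring.prime p" "is_p_group_set p (carrier G)"
    "carrier G \<noteq> {\<one>\<^bsub>G\<^esub>}"
  shows "has_p_elem_pcentralizer G p"
  using group.pgroup_has'[OF assms] .

lemma lcm_prime_cases:
  assumes "Factorial_Ring.prime (p::nat)" "lcm a b = p"
  shows "(a = 1 \<or> a = p) \<and> (b = 1 \<or> b = p)"
proof -
  have "a dvd p" "b dvd p" using assms(2) by auto
  then show ?thesis using assms(1) by (simp add: prime_nat_iff)
qed

theorem lemma4p5:
  fixes G :: "('a, 'c) monoid_scheme" and H :: "('b, 'd) monoid_scheme" and p :: nat
  assumes "group G" and "group H"
    and "finite (carrier G)" and "finite (carrier H)"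
    and "carrier G \<noteq> {\<one>\<^bsub>G\<^esub>}" and "carrier H \<noteq> {\<one>\<^bsub>H\<^esub>}"
    and "Factorial_Ring.prime p"
  shows "has_p_elem_pcentralizer (G \<times>\<times> H) p \<longleftrightarrow>
           has_p_elem_pcentralizer G p \<and> has_p_elem_pcentralizer H p"
proof
  assume "has_p_elem_pcentralizer (G \<times>\<times> H) p"
  then obtain g h where gh: "g \<in> carrier G" "h \<in> carrier H"
    and o: "group.ord (G \<times>\<times> H) (g, h) = p"
    and c: "is_p_group_set p (elem_centralizer (G \<times>\<times> H) (g, h))"
    unfolding has_p_elem_pcentralizer_def by auto
  have cs: "is_p_group_set p (elem_centralizer G g)" "is_p_group_set p (elem_centralizer H h)"
    using c pgroup_prod[OF assms(7)] centr_DirProd centr_one_in assms(1,2) gh by (metis empty_iff)+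
  have l: "lcm (group.ord G g) (group.ord H h) = p" using o ord_DirProd assms(1,2) gh by metis
  have cg: "elem_centralizer G \<one>\<^bsub>G\<^esub> = carrier G"
    unfolding elem_centralizer_def using assms(1) by (auto simp: group.is_monoid)
  have ch: "elem_centralizer H \<one>\<^bsub>H\<^esub> = carrier H"
    unfolding elem_centralizer_def using assms(2) by (auto simp: group.is_monoid)
  have G: "has_p_elem_pcentralizer G p"
  proof (cases "group.ord G g = p")
    case True then show ?thesis using gh cs unfolding has_p_elem_pcentralizer_def by blast
  next
    case False
    then have "group.ord G g = 1" using lcm_prime_cases[OF assms(7) l] by blast
    then have "g = \<one>\<^bsub>G\<^esub>" using group.ord_eq_1[OF assms(1) gh(1)] by blast
    then show ?thesis using pgroup_has[OF assms(1,3,7) _ assms(5)] cs cg by simp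
  qed
  have Hh: "has_p_elem_pcentralizer H p"
  proof (cases "group.ord H h = p")
    case True then show ?thesis using gh cs unfolding has_p_elem_pcentralizer_def by blast
  next
    case False
    then have "group.ord H h = 1" using lcm_prime_cases[OF assms(7) l] by blast
    then have "h = \<one>\<^bsub>H\<^esub>" using group.ord_eq_1[OF assms(2) gh(2)] by blast
    then show ?thesis using pgroup_has[OF assms(2,4,7) _ assms(6)] cs ch by simp
  qed
  show "has_p_elem_pcentralizer G p \<and> has_p_elem_pcentralizer H p" using G Hh by blast
next
  assume "has_p_elem_pcentralizer G p \<and> has_p_elem_pcentralizer H p"
  then obtain g h where gh: "g \<in> carrier G" "h \<in> carrier H"
    and o: "group.ord G g = p" "group.ord H h = p"
    and c: "is_p_group_set p (elem_centralizer G g)" "is_p_group_set p (elem_centralizer H h)"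
    unfolding has_p_elem_pcentralizer_def by auto
  have "group.ord (G \<times>\<times> H) (g, h) = p" using ord_DirProd[OF assms(1,2) gh] o by simp
  moreover have "is_p_group_set p (elem_centralizer (G \<times>\<times> H) (g, h))"
    using c pgroup_prod[OF assms(7)] centr_DirProd centr_one_in assms(1,2) gh by (metis empty_iff)
  ultimately show "has_p_elem_pcentralizer (G \<times>\<times> H) p"
    unfolding has_p_elem_pcentralizer_def using gh by auto
qed

end
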